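(* Let $\alpha>0$, $\nu:=\nu(\alpha)$, $T:=T(\alpha)$, and let $(a_n)_{n\ge1}$ be a positive sequence with $\lim_{n\to\infty}a_ne^{-\nu n}=0$. Let $(\chi_t)_{t\ge1}$ be defined by $\chi_t:=\max\{a_t,\frac{t-1}{\alpha}\chi_1,\dots,\frac1\alpha\chi_{t-1}\}$ and set $c_t:=\chi_te^{-\nu t}$. Then there exists $t_1$ such that $c_t=c_{t+T}$ for all $t\ge t_1$.
   Context: For $\alpha>0$, let $T=T(\alpha)\in\mathbb N$ be the unique positive integer with $\frac{(T-1)^T}{T^{T-1}}<\alpha\le\frac{T^{T+1}}{(T+1)^T}$, and define $\nu(\alpha):=\frac1T\log\frac T\alpha$. *)

theory Defs
  imports Complex_Main
begin

definition Tal :: "real \<Rightarrow> nat" where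
  "Tal \<alpha> = (THE T::nat. T > 0 \<and>
      (real T - 1) ^ T / real T ^ (T - 1) < \<alpha> \<and>
      \<alpha> \<le> real T ^ (T + 1) / (real T + 1) ^ T)"

definition nu :: "real \<Rightarrow> real" where
  "nu \<alpha> = (1 / real (Tal \<alpha>)) * ln (real (Tal \<alpha>) / \<alpha>)"

function chi :: "real \<Rightarrow> (nat \<Rightarrow> real) \<Rightarrow> nat \<Rightarrow> real" where
  "chi \<alpha> a t = Max (insert (a t) ((\<lambda>s. real (t - s) / \<alpha> * chi \<alpha> a s) ` {1..<t}))"
  by auto
termination
  by (relation "measure (\<lambda>(\<alpha>, a, t). t)") auto

end

theory Submission imports Defs begin

definition hh :: "nat \<Rightarrow> real" where "hh n = real n ^ (n+1) / (real n + 1) ^ n"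

lemma hh_less: "hh n < hh (Suc n)"
proof -
  have I: "(real n * (real n + 2))^(n+1) < ((real n+1)^2)^(n+1)"
    by (rule power_strict_mono) (auto simp: power2_eq_square algebra_simps)
  have A: "(real n * (real n + 2))^(n+1) = real n ^ (n+1) * (real n + 2)^(n+1)"
    by (rule power_mult_distrib)
  have e: "n + (n+2) = 2 * (n+1)" by simp
  have B: "((real n+1)^2)^(n+1) = (real n + 1)^n * (real n + 1)^(n+2)"
    by (simp only: power_add[symmetric] power_mult[symmetric] e)
  have C: "real n ^ (n+1) * (real n + 2)^(n+1) < (real n + 1)^n * (real n + 1)^(n+2)"
    using I unfolding A B .
  have p1: "(real n + 1)^n > 0" and p2: "(real n + 2)^(n+1) > 0" by auto
  have "real n ^ (n+1) / (real n + 1)^n < (real n + 1)^(n+2) / (real n + 2)^(n+1)"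
    using C p1 p2 by (simp add: divide_less_eq less_divide_eq mult.commute mult.left_commute)
  moreover have "hh (Suc n) = (real n + 1)^(n+2) / (real n + 2)^(n+1)"
    by (simp add: hh_def add.commute)
  ultimately show ?thesis unfolding hh_def by simp
qed

lemma hh_mono: "m < n \<Longrightarrow> hh m < hh n"
  using hh_less by (rule lift_Suc_mono_less)

lemma hh_mono_iff: "hh m < hh n \<longleftrightarrow> m < n"
  by (metis hh_mono not_less_iff_gr_or_eq order.asym)

lemma hh_big: "real n / exp 1 \<le> hh n"
proof (cases "n = 0")
  case True thus ?thesis by (simp add: hh_def)
next
  case False
  have "(1 + 1 / real n) ^ n \<le> exp (1/real n) ^ n"
    by (rule power_mono) auto
  also have "\<dots> = exp 1" using False by (simp add: exp_of_nat_mult[symmetric])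
  finally have "((real n + 1) / real n) ^ n \<le> exp 1" using False by (simp add: field_simps)
  hence "(real n + 1) ^ n \<le> exp 1 * real n ^ n" using False by (simp add: power_divide field_simps)
  hence "real n * (real n + 1) ^ n \<le> exp 1 * (real n * real n ^ n)"
    by (metis mult.left_commute mult_left_mono of_nat_0_le_iff)
  thus ?thesis unfolding hh_def by (simp add: field_simps)
qed

lemma Tal_props:
  assumes "\<alpha> > 0"
  shows "Tal \<alpha> > 0 \<and> (real (Tal \<alpha>) - 1) ^ Tal \<alpha> / real (Tal \<alpha>) ^ (Tal \<alpha> - 1) < \<alpha>
      \<and> \<alpha> \<le> real (Tal \<alpha>) ^ (Tal \<alpha> + 1) / (real (Tal \<alpha>) + 1) ^ Tal \<alpha>"
proof -
  have low: "(real T - 1) ^ T / real T ^ (T - 1) = hh (T - 1)" if "T > 0" for T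
    using that by (simp add: hh_def of_nat_diff)
  have P: "(T > 0 \<and> (real T - 1) ^ T / real T ^ (T - 1) < \<alpha> \<and> \<alpha> \<le> real T ^ (T + 1) / (real T + 1) ^ T)
        \<longleftrightarrow> (T > 0 \<and> hh (T-1) < \<alpha> \<and> \<alpha> \<le> hh T)" for T
  proof (cases "T > 0")
    case True
    show ?thesis unfolding low[OF True] hh_def[of T] by blast
  qed simp
  obtain n where n: "\<alpha> \<le> hh n"
  proof -
    obtain n :: nat where "\<alpha> * exp 1 \<le> real n" using real_arch_simple by blast
    hence "\<alpha> \<le> real n / exp 1" by (simp add: field_simps)
    thus ?thesis using hh_big that order.trans by blast
  qed
  define T where "T = (LEAST n. \<alpha> \<le> hh n)"
  have T1: "\<alpha> \<le> hh T" unfolding T_def using n by (rule LeastI)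
  have T0: "T > 0" using T1 assms by (cases T) (auto simp: hh_def)
  have T2: "hh (T-1) < \<alpha>"
  proof (rule ccontr)
    assume "\<not> ?thesis"
    hence "T \<le> T - 1" unfolding T_def by (intro Least_le) auto
    thus False using T0 by simp
  qed
  have uniq: "S = T" if "S > 0 \<and> hh (S-1) < \<alpha> \<and> \<alpha> \<le> hh S" for S
  proof -
    have "hh (S-1) < hh T" "hh (T-1) < hh S" using that T1 T2 by auto
    hence "S - 1 < T" "T - 1 < S" by (auto simp: hh_mono_iff)
    thus ?thesis using that T0 by linarith
  qed
  have "Tal \<alpha> = T" unfolding Tal_def P
  proof (rule the_equality)
    show "0 < T \<and> hh (T - 1) < \<alpha> \<and> \<alpha> \<le> hh T" using T0 T1 T2 by blast
  next
    fix S assume "0 < S \<and> hh (S - 1) < \<alpha> \<and> \<alpha> \<le> hh S"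
    thus "S = T" by (rule uniq)
  qed
  thus ?thesis unfolding \<open>Tal \<alpha> = T\<close> using P[of T] T0 T1 T2 by blast
qed


lemma key_up:
  fixes E :: real and T k :: nat
  assumes "T > 0" "E > 0" "real T + 1 \<le> real T * E" "T \<le> k"
  shows "real k * E ^ T \<le> real T * E ^ k"
  using assms(4)
proof (induction k rule: dec_induct)
  case base thus ?case by simp
next
  case (step k)
  have "real T \<le> real k" using step(1) by simp
  hence "(real k + 1) * real T \<le> real k * (real T + 1)" by (simp add: algebra_simps)
  also have "\<dots> \<le> real k * (real T * E)" using assms(3) by (intro mult_left_mono) auto
  finally have "(real k + 1) * real T \<le> (real k * E) * real T" by (simp add: algebra_simps)
  hence "real k + 1 \<le> real k * E" using assms(1) by (simp add: mult_le_cancel_right)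
  hence "(real k + 1) * E ^ T \<le> real k * E * E ^ T" using assms(2) by (intro mult_right_mono) auto
  also have "\<dots> = E * (real k * E ^ T)" by simp
  also have "\<dots> \<le> E * (real T * E ^ k)" using step(3) assms(2) by (intro mult_left_mono) auto
  finally show ?case by (simp add: algebra_simps)
qed

lemma key_down:
  fixes E :: real and T d :: nat
  assumes "T > 0" "E > 0" "T \<ge> 2 \<Longrightarrow> real (T - 1) * E \<le> real T" "d < T"
  shows "real (T - d) * E ^ T \<le> real T * E ^ (T - d)"
  using assms(4)
proof (induction d)
  case 0 thus ?case by simp
next
  case (Suc d)
  define k where "k = T - Suc d"
  have kk: "T - d = Suc k" using Suc.prems unfolding k_def by simp
  have k1: "k \<ge> 1" "k + 1 \<le> T" using Suc.prems unfolding k_def by auto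
  hence T2: "T \<ge> 2" by simp
  have IH: "real (Suc k) * E ^ T \<le> real T * E ^ Suc k" using Suc kk by simp
  have "real k * E * real (T - 1) \<le> real k * real T"
    using mult_left_mono[OF assms(3)[OF T2], of "real k"] by (simp add: algebra_simps)
  also have "\<dots> \<le> real (Suc k) * real (T - 1)" using k1 by (simp add: of_nat_diff algebra_simps)
  finally have "real k * E \<le> real (Suc k)" using T2 by (simp add: mult_le_cancel_right)
  hence "real k * E * E ^ T \<le> real (Suc k) * E ^ T" using assms(2) by (intro mult_right_mono) auto
  also have "\<dots> \<le> real T * E ^ Suc k" by (rule IH)
  finally have "E * (real k * E ^ T) \<le> E * (real T * E ^ k)" by (simp add: algebra_simps)
  thus ?case unfolding k_def[symmetric] using assms(2) by simp
qed

lemma key_ineq: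
  fixes E :: real and T k :: nat
  assumes "T > 0" "E > 0" "real T + 1 \<le> real T * E" "T \<ge> 2 \<Longrightarrow> real (T - 1) * E \<le> real T"
    "k \<ge> 1"
  shows "real k * E ^ T \<le> real T * E ^ k"
proof (cases "T \<le> k")
  case True thus ?thesis using key_up assms by blast
next
  case False
  then obtain d where "d < T" "k = T - d" using assms(5) by (intro that[of "T - k"]) auto
  thus ?thesis using key_down assms by blast
qed

inductive_set gen :: "real set \<Rightarrow> real set \<Rightarrow> real set" for F B where
  base: "x \<in> B \<Longrightarrow> x \<in> gen F B"
| step: "x \<in> gen F B \<Longrightarrow> f \<in> F \<Longrightarrow> f * x \<in> gen F B"

primrec lay :: "real set \<Rightarrow> real set \<Rightarrow> nat \<Rightarrow> real set" where
  "lay F B 0 = B"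
| "lay F B (Suc n) = (\<lambda>(f,x). f * x) ` (F \<times> lay F B n)"

lemma gen_lay: "x \<in> gen F B \<Longrightarrow> \<exists>n. x \<in> lay F B n"
proof (induction rule: gen.induct)
  case (base x) thus ?case by (intro exI[of _ 0]) simp
next
  case (step x f)
  then obtain n where "x \<in> lay F B n" by blast
  hence "f * x \<in> lay F B (Suc n)" using step by force
  thus ?case by blast
qed

lemma finite_lay: "finite F \<Longrightarrow> finite B \<Longrightarrow> finite (lay F B n)"
  by (induction n) auto

lemma lay_bound:
  assumes "\<forall>f\<in>F. 0 < f \<and> f \<le> q" "\<forall>x\<in>B. 0 < x \<and> x \<le> M"
  shows "x \<in> lay F B n \<Longrightarrow> 0 < x \<and> x \<le> q ^ n * M"
proof (induction n arbitrary: x)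
  case 0 thus ?case using assms by simp
next
  case (Suc n)
  then obtain f y where fy: "f \<in> F" "y \<in> lay F B n" "x = f * y" by auto
  have "0 < y" "y \<le> q ^ n * M" using Suc.IH fy by auto
  moreover have "0 < f" "f \<le> q" using assms fy by auto
  ultimately have "f * y \<le> q * (q ^ n * M)" by (intro mult_mono) auto
  thus ?case using fy \<open>0 < y\<close> \<open>0 < f\<close> by simp
qed

lemma finite_gen_above:
  assumes F: "finite F" "\<forall>f\<in>F. 0 < f \<and> f < 1"
    and B: "finite B" "\<forall>x\<in>B. 0 < x \<and> x \<le> M" and L: "L > 0"
  shows "finite {x \<in> gen F B. L \<le> x}"
proof -
  define q where "q = Max (insert 0 F)"
  have q0: "0 \<le> q" unfolding q_def using F by simp
  have q1: "q < 1" unfolding q_def using F by (subst Max_less_iff) auto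
  have fq: "\<forall>f\<in>F. 0 < f \<and> f \<le> q" unfolding q_def using F by auto
  have M0: "M \<ge> 0 \<or> B = {}" using B by force
  obtain N where N: "q ^ N < L / (max M 1)"
    using real_arch_pow_inv[of "L / max M 1" q] L q1 by auto
  have "{x \<in> gen F B. L \<le> x} \<subseteq> (\<Union>n<N. lay F B n)"
  proof safe
    fix x assume x: "x \<in> gen F B" "L \<le> x"
    then obtain n where n: "x \<in> lay F B n" using gen_lay by blast
    have b: "0 < x" "x \<le> q ^ n * M" using lay_bound[OF fq B(2) n] by auto
    have "n < N"
    proof (rule ccontr)
      assume "\<not> n < N"
      hence "q ^ n \<le> q ^ N" using q0 q1 by (intro power_decreasing) auto
      have "x \<le> q ^ n * max M 1" using b q0 by (meson max.cobounded1 mult_left_mono order.trans zero_le_power)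
      also have "\<dots> \<le> q ^ N * max M 1" using \<open>q ^ n \<le> q ^ N\<close> by (intro mult_right_mono) auto
      also have "\<dots> < L" using N by (simp add: pos_less_divide_eq)
      finally show False using x by simp
    qed
    thus "x \<in> (\<Union>n<N. lay F B n)" using n by blast
  qed
  moreover have "finite (\<Union>n<N. lay F B n)" using finite_lay F B by auto
  ultimately show ?thesis by (rule finite_subset)
qed

lemma incseq_finite_const:
  fixes g :: "nat \<Rightarrow> real"
  assumes "\<And>n. g n \<le> g (Suc n)" "finite (range g)"
  shows "\<exists>N. \<forall>n\<ge>N. g n = g N"
proof -
  have "Max (range g) \<in> range g" using assms by (intro Max_in) auto
  then obtain N where N: "g N = Max (range g)" by auto
  have mono: "g m \<le> g n" if "m \<le> n" for m n using assms(1) that by (rule lift_Suc_mono_le)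
  show ?thesis
  proof (intro exI allI impI)
    fix n assume "n \<ge> N"
    hence "g N \<le> g n" by (rule mono)
    moreover have "g n \<le> g N" unfolding N using assms by simp
    ultimately show "g n = g N" by simp
  qed
qed


declare chi.simps[simp del]

lemma chi_eq: "chi \<alpha> a t = Max (insert (a t) ((\<lambda>s. real (t - s) / \<alpha> * chi \<alpha> a s) ` {1..<t}))"
  by (rule chi.simps)

lemma chi_ge_a: "a t \<le> chi \<alpha> a t"
  by (subst chi_eq) (rule Max_ge, auto)

lemma chi_ge: "s \<in> {1..<t} \<Longrightarrow> real (t - s) / \<alpha> * chi \<alpha> a s \<le> chi \<alpha> a t"
  by (subst (2) chi_eq) (rule Max_ge, auto)

lemma chi_cases: "chi \<alpha> a t = a t \<or> (\<exists>s\<in>{1..<t}. chi \<alpha> a t = real (t - s) / \<alpha> * chi \<alpha> a s)"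
proof -
  have "chi \<alpha> a t \<in> insert (a t) ((\<lambda>s. real (t - s) / \<alpha> * chi \<alpha> a s) ` {1..<t})"
    by (subst chi_eq) (rule Max_in, auto)
  thus ?thesis by auto
qed

lemma exp_split: "s \<le> t \<Longrightarrow> exp (- v * real t) = exp (- v * real (t - s)) * exp (- v * real s)"
  by (simp add: exp_add[symmetric] of_nat_diff algebra_simps)

theorem proposition1:
  fixes \<alpha> :: real and a :: "nat \<Rightarrow> real"
  assumes "\<alpha> > 0"
    and "\<And>n. n \<ge> 1 \<Longrightarrow> a n > 0"
    and "(\<lambda>n. a n * exp (- nu \<alpha> * real n)) \<longlonglongrightarrow> 0"
  shows "\<exists>t1. \<forall>t\<ge>t1.
           chi \<alpha> a t * exp (- nu \<alpha> * real t)
         = chi \<alpha> a (t + Tal \<alpha>) * exp (- nu \<alpha> * real (t + Tal \<alpha>))"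
proof -
  define T where "T = Tal \<alpha>"
  define \<nu> where "\<nu> = nu \<alpha>"
  define E where "E = exp \<nu>"
  define b where "b = (\<lambda>n. a n * exp (- \<nu> * real n))"
  define c where "c = (\<lambda>n. chi \<alpha> a n * exp (- \<nu> * real n))"
  define f where "f = (\<lambda>k. real k / \<alpha> * exp (- \<nu> * real k))"
  have TP: "T > 0" "(real T - 1) ^ T / real T ^ (T - 1) < \<alpha>" "\<alpha> \<le> real T ^ (T + 1) / (real T + 1) ^ T"
    using Tal_props[OF assms(1)] unfolding T_def by auto
  have E0: "E > 0" unfolding E_def by simp
  have Epow: "E ^ k = exp (\<nu> * real k)" for k
    unfolding E_def by (simp add: exp_of_nat_mult[symmetric] mult.commute)
  have ET: "E ^ T = real T / \<alpha>"
  proof -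
    have "\<nu> * real T = ln (real T / \<alpha>)" unfolding \<nu>_def nu_def T_def[symmetric] using TP(1) by simp
    thus ?thesis unfolding Epow using TP(1) assms(1) by simp
  qed
  have up: "real T + 1 \<le> real T * E"
  proof -
    have "\<alpha> * (real T + 1) ^ T \<le> real T ^ (T + 1)" using TP(3) by (simp add: le_divide_eq)
    hence "(real T + 1) ^ T \<le> real T ^ (T+1) / \<alpha>" using assms(1) by (simp add: le_divide_eq mult.commute)
    also have "\<dots> = (real T * E) ^ T" using ET assms(1) by (simp add: power_mult_distrib)
    finally have "(real T + 1) ^ Suc (T - 1) \<le> (real T * E) ^ Suc (T - 1)" using TP(1) by simp
    thus ?thesis by (rule power_le_imp_le_base) (use E0 in simp)
  qed
  have down: "real (T - 1) * E \<le> real T" if "T \<ge> 2"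
  proof -
    have "(real T - 1) ^ T < \<alpha> * real T ^ (T - 1)" using TP(2) that by (simp add: divide_less_eq mult.commute)
    hence "(real T - 1) ^ T * (real T / \<alpha>) < \<alpha> * real T ^ (T - 1) * (real T / \<alpha>)"
      using assms(1) that by (intro mult_strict_right_mono) auto
    also have "\<alpha> * real T ^ (T - 1) * (real T / \<alpha>) = real T ^ Suc (T - 1)" using assms(1) by simp
    also have "\<dots> = real T ^ T" using that by simp
    finally have "(real (T - 1) * E) ^ T < real T ^ T" using that ET by (simp add: power_mult_distrib of_nat_diff)
    hence "real (T - 1) * E < real T" by (rule power_less_imp_less_base) simp
    thus ?thesis by (rule less_imp_le)
  qed
  have fE: "f k = real k / (\<alpha> * E ^ k)" for k
    unfolding f_def Epow by (simp add: exp_minus field_simps)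
  have f_le: "f k \<le> 1" if "k \<ge> 1" for k
  proof -
    have "real k * E ^ T \<le> real T * E ^ k" by (rule key_ineq[OF TP(1) E0 up down that])
    hence "real k * (real T / \<alpha>) \<le> real T * E ^ k" unfolding ET .
    hence "real k \<le> \<alpha> * E ^ k" using TP(1) assms(1) by (simp add: field_simps)
    thus ?thesis unfolding fE using assms(1) E0 by (simp add: divide_le_eq)
  qed
  have f_pos: "f k > 0" if "k \<ge> 1" for k unfolding f_def using that assms(1) by simp
  have f_T: "f T = 1" unfolding fE ET using TP(1) assms(1) by simp
  have E1: "E > 1"
  proof (rule ccontr)
    assume "\<not> E > 1"
    hence "real T * E \<le> real T * 1" by (intro mult_left_mono) auto
    thus False using up by simp
  qed
  have f_lim: "f \<longlonglongrightarrow> 0"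
  proof -
    have "(\<lambda>n. real n / E ^ n) \<longlonglongrightarrow> 0" using lim_n_over_pown[of E] E1 by simp
    hence "(\<lambda>n. (1/\<alpha>) * (real n / E ^ n)) \<longlonglongrightarrow> (1/\<alpha>) * 0" by (intro tendsto_mult) auto
    moreover have "(\<lambda>n. (1/\<alpha>) * (real n / E ^ n)) = f" unfolding fE by (auto simp: fun_eq_iff)
    ultimately show ?thesis by simp
  qed
  have c_ge: "f (t - s) * c s \<le> c t" if "s \<in> {1..<t}" for s t
  proof -
    have "f (t - s) * c s = real (t - s) / \<alpha> * chi \<alpha> a s * exp (- \<nu> * real t)"
      unfolding f_def c_def using exp_split[of s t \<nu>] that by simp
    also have "\<dots> \<le> c t" unfolding c_def using chi_ge[OF that, of \<alpha> a] by (intro mult_right_mono) auto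
    finally show ?thesis .
  qed
  have c_ge_b: "b t \<le> c t" for t unfolding b_def c_def using chi_ge_a[of a t \<alpha>] by (intro mult_right_mono) auto
  have c_cases: "c t = b t \<or> (\<exists>s\<in>{1..<t}. c t = f (t - s) * c s)" for t
  proof -
    have eq: "real (t - s) / \<alpha> * chi \<alpha> a s * exp (- \<nu> * real t) = f (t - s) * c s" if "s \<in> {1..<t}" for s
      unfolding f_def c_def using exp_split[of s t \<nu>] that by simp
    from chi_cases[of \<alpha> a t] show ?thesis
    proof
      assume "chi \<alpha> a t = a t" thus ?thesis unfolding c_def b_def by simp
    next
      assume "\<exists>s\<in>{1..<t}. chi \<alpha> a t = real (t - s) / \<alpha> * chi \<alpha> a s"
      then obtain s where "s \<in> {1..<t}" "chi \<alpha> a t = real (t - s) / \<alpha> * chi \<alpha> a s" by blast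
      thus ?thesis using eq[of s] unfolding c_def by auto
    qed
  qed
  have b_pos: "b t > 0" if "t \<ge> 1" for t unfolding b_def using assms(2)[OF that] by simp
  have c_pos: "c t > 0" if "t \<ge> 1" for t using b_pos[OF that] c_ge_b[of t] by simp
  have cT: "c t \<le> c (t + T)" if "t \<ge> 1" for t
    using c_ge[of t "t + T"] that TP(1) f_T by simp
  have "Bseq b" using assms(3) unfolding b_def \<nu>_def by (intro convergent_imp_Bseq convergentI)
  then obtain K where K: "K > 0" "\<And>n. \<bar>b n\<bar> \<le> K" by (auto elim!: BseqE)
  have c_le: "c t \<le> K" if "t \<ge> 1" for t
    using that
  proof (induction t rule: less_induct)
    case (less t)
    from c_cases[of t] show ?case
    proof
      assume "c t = b t" thus ?thesis using K(2)[of t] by simp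
    next
      assume "\<exists>s\<in>{1..<t}. c t = f (t - s) * c s"
      then obtain s where s: "s \<in> {1..<t}" "c t = f (t - s) * c s" by blast
      have "f (t - s) * c s \<le> 1 * c s" using f_le[of "t - s"] c_pos[of s] s(1)
        by (intro mult_right_mono) auto
      also have "\<dots> \<le> K" using less.IH[of s] s(1) by simp
      finally show ?thesis using s by simp
    qed
  qed
  define L where "L = Min (c ` {1..T})"
  have L0: "L > 0" unfolding L_def using TP(1) c_pos by (subst Min_gr_iff) auto
  have c_L: "L \<le> c t" if "t \<ge> 1" for t
    using that
  proof (induction t rule: less_induct)
    case (less t)
    show ?case
    proof (cases "t \<le> T")
      case True thus ?thesis unfolding L_def using less.prems by (intro Min_le) auto
    next
      case False
      hence "L \<le> c (t - T)" using less.IH[of "t - T"] TP(1) by simp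
      also have "\<dots> \<le> c (t - T + T)" using False by (intro cT) simp
      finally show ?thesis using False by simp
    qed
  qed
  have "b \<longlonglongrightarrow> 0" using assms(3) unfolding b_def \<nu>_def .
  from order_tendstoD(2)[OF this L0] obtain t0 where t0: "\<And>t. t \<ge> t0 \<Longrightarrow> b t < L"
    unfolding eventually_sequentially by blast
  have "L / K > 0" using L0 K by simp
  from order_tendstoD(2)[OF f_lim this] obtain Kf where Kf: "\<And>k. k \<ge> Kf \<Longrightarrow> f k < L / K"
    unfolding eventually_sequentially by blast
  define t0' where "t0' = max t0 1"
  define F where "F = {x \<in> f ` {1..<Kf}. x < 1}"
  define B where "B = c ` {1..<t0'}"
  have rec: "\<exists>s\<in>{1..<t}. t - s < Kf \<and> c t = f (t - s) * c s" if "t \<ge> t0'" for t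
  proof -
    have t1: "t \<ge> 1" "t \<ge> t0" using that unfolding t0'_def by auto
    have "c t \<noteq> b t" using t0[OF t1(2)] c_L[OF t1(1)] by simp
    then obtain s where s: "s \<in> {1..<t}" "c t = f (t - s) * c s" using c_cases[of t] by blast
    have "t - s < Kf"
    proof (rule ccontr)
      assume "\<not> t - s < Kf"
      hence "f (t - s) < L / K" using Kf by simp
      have ts: "t - s \<ge> 1" using s(1) by auto
      have "f (t - s) * c s \<le> f (t - s) * K" using c_le[of s] f_pos[OF ts] s(1)
        by (intro mult_left_mono) auto
      moreover have "f (t - s) * K < L" using \<open>f (t - s) < L / K\<close> K(1) by (simp add: less_divide_eq)
      ultimately show False using s c_L[OF t1(1)] by simp
    qed
    thus ?thesis using s by blast
  qed
  have in_gen: "c t \<in> gen F B" if "t \<ge> 1" for t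
    using that
  proof (induction t rule: less_induct)
    case (less t)
    show ?case
    proof (cases "t < t0'")
      case True thus ?thesis unfolding B_def using less.prems by (intro gen.base) auto
    next
      case False
      then obtain s where s: "s \<in> {1..<t}" "t - s < Kf" "c t = f (t - s) * c s" using rec[of t] by auto
      have IH: "c s \<in> gen F B" using less.IH[of s] s(1) by simp
      show ?thesis
      proof (cases "f (t - s) < 1")
        case True
        hence "f (t - s) \<in> F" unfolding F_def using s by auto
        thus ?thesis using gen.step[OF IH] s(3) by simp
      next
        case False
        hence "f (t - s) = 1" using f_le[of "t - s"] s(1) by auto
        thus ?thesis using IH s(3) by simp
      qed
    qed
  qed
  define V where "V = {x \<in> gen F B. L \<le> x}"
  have finV: "finite V" unfolding V_def
  proof (rule finite_gen_above[OF _ _ _ _ L0])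
    show "finite F" unfolding F_def by simp
    show "\<forall>f\<in>F. 0 < f \<and> f < 1" unfolding F_def using f_pos by auto
    show "finite B" unfolding B_def by simp
    show "\<forall>x\<in>B. 0 < x \<and> x \<le> K" unfolding B_def using c_pos c_le by auto
  qed
  have inV: "c t \<in> V" if "t \<ge> 1" for t unfolding V_def using in_gen[OF that] c_L[OF that] by simp
  have "\<forall>r\<in>{1..T}. \<exists>N. \<forall>n\<ge>N. c (r + n * T) = c (r + N * T)"
  proof
    fix r assume r: "r \<in> {1..T}"
    show "\<exists>N. \<forall>n\<ge>N. c (r + n * T) = c (r + N * T)"
    proof (rule incseq_finite_const)
      show "c (r + n * T) \<le> c (r + Suc n * T)" for n using cT[of "r + n * T"] r by (simp add: algebra_simps)
      have "range (\<lambda>n. c (r + n * T)) \<subseteq> V" using inV r by auto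
      thus "finite (range (\<lambda>n. c (r + n * T)))" using finV by (rule finite_subset)
    qed
  qed
  then obtain Nf where Nf: "\<And>r n. r \<in> {1..T} \<Longrightarrow> n \<ge> Nf r \<Longrightarrow> c (r + n * T) = c (r + Nf r * T)"
    by metis
  define N where "N = Max (Nf ` {1..T})"
  have NN: "Nf r \<le> N" if "r \<in> {1..T}" for r unfolding N_def using that by (intro Max_ge) auto
  have main: "c t = c (t + T)" if "t \<ge> 1 + N * T" for t
  proof -
    define r where "r = (t - 1) mod T + 1"
    define n where "n = (t - 1) div T"
    have r: "r \<in> {1..T}" unfolding r_def using TP(1) by (simp add: Suc_leI)
    have tr: "t = r + n * T" unfolding r_def n_def using that by simp
    have "N * T \<le> t - 1" using that by simp
    hence "N * T div T \<le> (t - 1) div T" by (rule div_le_mono)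
    hence "N \<le> n" unfolding n_def using TP(1) by simp
    hence n1: "Nf r \<le> n" using NN[OF r] by simp
    have "c t = c (r + Nf r * T)" unfolding tr by (rule Nf[OF r n1])
    also have "\<dots> = c (r + Suc n * T)" using Nf[OF r, of "Suc n"] n1 by simp
    also have "r + Suc n * T = t + T" using tr by simp
    finally show ?thesis .
  qed
  show ?thesis
    using main unfolding c_def T_def \<nu>_def by blast
qed

end
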